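(* Fix a constant arity $k\in\mathbb{N}_+$. There is a constant $C>0$ (depending only on $k$) such that for every $\varepsilon>0$ there exists an $(\varepsilon,0)$-differentially private algorithm that, on every Max-CSP instance $\Phi$ (with constraints of arity at most $k$), outputs a (random) assignment $x\in\{\pm1\}^n$ with $$\mathbb{E}[\mathrm{val}_\Phi(x)]\ \ge\ \left(1-\frac{C}{\varepsilon}\right)\mathrm{OPT}(\Phi),$$ where $\mathrm{OPT}(\Phi)$ is the maximum number of constraints of $\Phi$ satisfiable by a single assignment.
   Context: A Max-CSP instance $\Phi$ on $n$ Boolean variables $x_1,\dots,x_n\in\{\pm1\}$ is a multiset of $m$ constraints $(P_i,S_i)$, where $S_i$ is an ordered list of at most $k$ indices from $[n]$ (the scope) and $P_i:\{\pm1\}^{|S_i|}\to\{0,1\}$ is a predicate; the constraint is satisfied by $x$ if $P_i(x_{S_i})=1$, and $\mathrm{val}_\Phi(x)$ is the number of satisfied constraints. The number of variables $n$ is public. Two instances are neighboring if one is obtained from the other by adding or removing a single constraint. A randomized algorithm $\mathcal{M}$ is $(\varepsilon,\delta)$-differentially private if for all neighboring $\Phi,\Phi'$ and all measurable sets $T$ of outputs, $\Pr[\mathcal{M}(\Phi)\in T]\le e^{\varepsilon}\Pr[\mathcal{M}(\Phi')\in T]+\delta$. *)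

theory Defs
  imports "HOL-Probability.Probability" "HOL-Library.Multiset"
begin

text \<open>Boolean variables x_i in {+1,-1} are encoded as bool (True = +1, False = -1);
  an assignment to n variables is a bool list of length n (variables indexed 0..n-1).
  A constraint is a pair (P, S): a predicate P on tuples (lists) and an ordered scope S.\<close>

type_synonym constr = "(bool list \<Rightarrow> bool) \<times> nat list"
type_synonym csp_inst = "constr multiset"

definition assignments :: "nat \<Rightarrow> bool list set" where
  "assignments n = {x. length x = n}"

definition sat :: "constr \<Rightarrow> bool list \<Rightarrow> bool" where
  "sat c x = fst c (map (\<lambda>i. x ! i) (snd c))"

definition val :: "csp_inst \<Rightarrow> bool list \<Rightarrow> nat" where
  "val \<Phi> x = size (filter_mset (\<lambda>c. sat c x) \<Phi>)"

definition OPT :: "nat \<Rightarrow> csp_inst \<Rightarrow> nat" where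
  "OPT n \<Phi> = Max (val \<Phi> ` assignments n)"

definition valid_instance :: "nat \<Rightarrow> nat \<Rightarrow> csp_inst \<Rightarrow> bool" where
  "valid_instance k n \<Phi> \<longleftrightarrow>
     (\<forall>c \<in># \<Phi>. length (snd c) \<le> k \<and> (\<forall>i \<in> set (snd c). i < n))"

definition neighboring :: "csp_inst \<Rightarrow> csp_inst \<Rightarrow> bool" where
  "neighboring \<Phi> \<Phi>' \<longleftrightarrow> (\<exists>c. \<Phi>' = \<Phi> + {#c#} \<or> \<Phi> = \<Phi>' + {#c#})"

text \<open>An algorithm takes the public n and the instance and returns a distribution
  over outputs. (eps,delta)-DP over the domain of valid arity-k instances.\<close>
definition diff_private ::
  "nat \<Rightarrow> real \<Rightarrow> real \<Rightarrow> (nat \<Rightarrow> csp_inst \<Rightarrow> 'a pmf) \<Rightarrow> bool" where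
  "diff_private k \<epsilon> \<delta> M \<longleftrightarrow>
     (\<forall>n \<Phi> \<Phi>' T. valid_instance k n \<Phi> \<longrightarrow> valid_instance k n \<Phi>' \<longrightarrow> neighboring \<Phi> \<Phi>' \<longrightarrow>
        measure_pmf.prob (M n \<Phi>) T \<le> exp \<epsilon> * measure_pmf.prob (M n \<Phi>') T + \<delta>)"

end

theory Submission
  imports Defs
begin

lemma card_set_mset_le: "card (set_mset M) \<le> size M"
  by (induction M) (auto simp: card_insert_if)

lemma fin: "finite (assignments n)" and cardA: "card (assignments n) = 2^n"
  using finite_lists_length_eq[of "UNIV::bool set" n] card_lists_length_eq[of "UNIV::bool set" n]
  by (auto simp: assignments_def)

lemma count_agree:
  assumes "finite I" "I \<subseteq> {..<n}"
  shows "card {x\<in>assignments n. \<forall>i\<in>I. x!i = y!i} * 2^card I = 2^n"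
  using assms
proof (induction I rule: finite_induct)
  case empty
  then show ?case by (simp add: cardA)
next
  case (insert j I)
  define S where "S = {x\<in>assignments n. \<forall>i\<in>I. x!i = y!i}"
  define S1 where "S1 = {x\<in>assignments n. \<forall>i\<in>insert j I. x!i = y!i}"
  define S2 where "S2 = {x\<in>S. x!j \<noteq> y!j}"
  define fl where "fl = (\<lambda>x::bool list. x[j := \<not> x!j])"
  have jn: "j < n" using insert by auto
  have IH: "card S * 2^card I = 2^n" using insert S_def by auto
  have finS: "finite S" unfolding S_def using fin by auto
  have SU: "S = S1 \<union> S2" "S1 \<inter> S2 = {}" unfolding S_def S1_def S2_def by auto
  have flfl: "fl (fl x) = x" if "length x = n" for x
    using that jn by (simp add: fl_def)
  have flS1: "fl x \<in> S2" if x: "x \<in> S1" for x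
  proof -
    have lx: "length x = n" and xI: "\<forall>i\<in>insert j I. x!i = y!i"
      using x by (auto simp: S1_def assignments_def)
    have l: "length (fl x) = n" by (simp add: fl_def lx)
    have "fl x ! i = y ! i" if "i \<in> I" for i
    proof -
      have "i \<noteq> j" using that insert.hyps(2) by blast
      then have "fl x ! i = x ! i" by (simp add: fl_def)
      then show ?thesis using xI that by simp
    qed
    moreover have "fl x ! j \<noteq> y ! j"
      using jn lx xI by (simp add: fl_def)
    ultimately show ?thesis using l by (simp add: S2_def S_def assignments_def)
  qed
  have S2fl: "fl z \<in> S1" if z: "z \<in> S2" for z
  proof -
    have lz: "length z = n" and zI: "\<forall>i\<in>I. z!i = y!i" and zj: "z!j \<noteq> y!j"
      using z by (auto simp: S2_def S_def assignments_def)
    have l: "length (fl z) = n" by (simp add: fl_def lz)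
    have "fl z ! i = y ! i" if "i \<in> I" for i
    proof -
      have "i \<noteq> j" using that insert.hyps(2) by blast
      then have "fl z ! i = z ! i" by (simp add: fl_def)
      then show ?thesis using zI that by simp
    qed
    moreover have "fl z ! j = y ! j"
      using jn lz zj by (simp add: fl_def)
    ultimately show ?thesis using l by (simp add: S1_def assignments_def)
  qed
  have inj: "inj_on fl S1"
  proof (rule inj_onI)
    fix x z assume xz: "x \<in> S1" "z \<in> S1" "fl x = fl z"
    then have "length x = n" "length z = n" by (auto simp: S1_def assignments_def)
    then have "x = fl (fl x)" "z = fl (fl z)" using flfl by simp_all
    then show "x = z" using xz(3) by simp
  qed
  have img: "fl ` S1 = S2"
  proof
    show "fl ` S1 \<subseteq> S2" using flS1 by blast
  next
    show "S2 \<subseteq> fl ` S1"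
    proof
      fix z assume z: "z \<in> S2"
      then have lz: "length z = n" by (auto simp: S2_def S_def assignments_def)
      have "z = fl (fl z)" using flfl lz by simp
      then show "z \<in> fl ` S1" using S2fl[OF z] by blast
    qed
  qed
  have "card S = card S1 + card S2"
    using SU finS by (simp add: card_Un_disjoint)
  also have "card S2 = card S1" using img inj card_image by fastforce
  finally have "card S = 2 * card S1" by simp
  then show ?case using IH insert.hyps S1_def by simp
qed


definition W :: "real \<Rightarrow> csp_inst \<Rightarrow> bool list \<Rightarrow> real" where
  "W b \<Phi> x = exp (b * real (val \<Phi> x))"

definition Zn :: "real \<Rightarrow> nat \<Rightarrow> csp_inst \<Rightarrow> real" where
  "Zn b n \<Phi> = (\<Sum>y\<in>assignments n. W b \<Phi> y)"

definition gibbs :: "real \<Rightarrow> nat \<Rightarrow> csp_inst \<Rightarrow> bool list pmf" where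
  "gibbs b n \<Phi> = embed_pmf (\<lambda>x. if x \<in> assignments n then W b \<Phi> x / Zn b n \<Phi> else 0)"

lemma W_pos: "W b \<Phi> x > 0" by (simp add: W_def)

lemma ne: "assignments n \<noteq> {}"
proof -
  have "replicate n True \<in> assignments n" by (simp add: assignments_def)
  then show ?thesis by blast
qed

lemma Zn_pos: "Zn b n \<Phi> > 0"
  unfolding Zn_def using fin ne W_pos by (simp add: sum_pos)

lemma pmf_gibbs: "pmf (gibbs b n \<Phi>) x = (if x \<in> assignments n then W b \<Phi> x / Zn b n \<Phi> else 0)"
  unfolding gibbs_def
proof (rule pmf_embed_pmf)
  show "\<And>x. 0 \<le> (if x \<in> assignments n then W b \<Phi> x / Zn b n \<Phi> else 0)"
    using W_pos Zn_pos by (simp add: less_imp_le)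
  have "(\<integral>\<^sup>+ x. ennreal (if x \<in> assignments n then W b \<Phi> x / Zn b n \<Phi> else 0) \<partial>count_space UNIV)
      = (\<Sum>x\<in>assignments n. ennreal (if x \<in> assignments n then W b \<Phi> x / Zn b n \<Phi> else 0))"
    by (rule nn_integral_count_space') (auto simp: fin)
  also have "\<dots> = (\<Sum>x\<in>assignments n. ennreal (W b \<Phi> x / Zn b n \<Phi>))"
    by (rule sum.cong) auto
  also have "\<dots> = ennreal (\<Sum>x\<in>assignments n. W b \<Phi> x / Zn b n \<Phi>)"
    using W_pos Zn_pos by (intro sum_ennreal) (simp add: less_imp_le)
  also have "(\<Sum>x\<in>assignments n. W b \<Phi> x / Zn b n \<Phi>) = 1"
    using Zn_pos[of b n \<Phi>] by (simp add: sum_divide_distrib[symmetric] Zn_def)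
  finally show "(\<integral>\<^sup>+ x. ennreal (if x \<in> assignments n then W b \<Phi> x / Zn b n \<Phi> else 0) \<partial>count_space UNIV) = 1"
    by simp
qed

lemma set_gibbs: "set_pmf (gibbs b n \<Phi>) \<subseteq> assignments n"
  using pmf_gibbs by (auto simp: set_pmf_iff split: if_splits)

lemma prob_gibbs:
  "measure_pmf.prob (gibbs b n \<Phi>) T = (\<Sum>x\<in>T \<inter> assignments n. W b \<Phi> x / Zn b n \<Phi>)"
proof -
  let ?p = "gibbs b n \<Phi>"
  have "measure_pmf.prob ?p T = measure_pmf.prob ?p (T \<inter> set_pmf ?p)"
    by (simp add: measure_Int_set_pmf)
  also have "T \<inter> set_pmf ?p = (T \<inter> assignments n) \<inter> set_pmf ?p" using set_gibbs by blast
  also have "measure_pmf.prob ?p \<dots> = measure_pmf.prob ?p (T \<inter> assignments n)"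
    by (simp add: measure_Int_set_pmf)
  also have "\<dots> = (\<Sum>x\<in>T \<inter> assignments n. pmf ?p x)"
    using fin by (simp add: measure_measure_pmf_finite)
  also have "\<dots> = (\<Sum>x\<in>T \<inter> assignments n. W b \<Phi> x / Zn b n \<Phi>)"
    by (rule sum.cong) (auto simp: pmf_gibbs)
  finally show ?thesis .
qed

lemma expect_gibbs:
  "measure_pmf.expectation (gibbs b n \<Phi>) f = (\<Sum>x\<in>assignments n. W b \<Phi> x / Zn b n \<Phi> * f x)"
proof -
  have "measure_pmf.expectation (gibbs b n \<Phi>) f = (\<Sum>x\<in>assignments n. pmf (gibbs b n \<Phi>) x *\<^sub>R f x)"
    by (rule integral_measure_pmf[OF fin]) (use set_gibbs in blast)
  also have "\<dots> = (\<Sum>x\<in>assignments n. W b \<Phi> x / Zn b n \<Phi> * f x)"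
    by (rule sum.cong) (auto simp: pmf_gibbs)
  finally show ?thesis .
qed

lemma val_add: "val (add_mset c \<Phi>) x = val \<Phi> x + (if sat c x then 1 else 0)"
  by (simp add: val_def)

lemma W_le: assumes "b \<ge> 0" "neighboring \<Phi> \<Phi>'"
  shows "W b \<Phi> x \<le> exp b * W b \<Phi>' x"
proof -
  have "real (val \<Phi> x) \<le> real (val \<Phi>' x) + 1"
    using assms(2) unfolding neighboring_def by (auto simp: val_add)
  then have "b * real (val \<Phi> x) \<le> b + b * real (val \<Phi>' x)"
    using assms(1) by (metis add.commute distrib_left mult.right_neutral mult_left_mono)
  then show ?thesis unfolding W_def by (simp add: exp_add[symmetric])
qed

lemma neighboring_sym: "neighboring \<Phi> \<Phi>' \<Longrightarrow> neighboring \<Phi>' \<Phi>"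
  unfolding neighboring_def by blast

lemma Zn_le: assumes "b \<ge> 0" "neighboring \<Phi> \<Phi>'"
  shows "Zn b n \<Phi> \<le> exp b * Zn b n \<Phi>'"
  unfolding Zn_def sum_distrib_left by (rule sum_mono) (rule W_le[OF assms])

lemma gibbs_dp: assumes "\<epsilon> > 0"
  shows "diff_private k \<epsilon> 0 (gibbs (\<epsilon>/2))"
  unfolding diff_private_def
proof (intro allI impI)
  fix n \<Phi> \<Phi>' T assume nb: "neighboring \<Phi> \<Phi>'"
  let ?b = "\<epsilon>/2"
  have b0: "?b \<ge> 0" using assms by simp
  have e: "exp \<epsilon> = exp ?b * exp ?b" by (simp add: exp_add[symmetric])
  have pt: "W ?b \<Phi> x / Zn ?b n \<Phi> \<le> exp \<epsilon> * (W ?b \<Phi>' x / Zn ?b n \<Phi>')" for x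
  proof -
    have z1: "Zn ?b n \<Phi>' \<le> exp ?b * Zn ?b n \<Phi>" by (rule Zn_le[OF b0 neighboring_sym[OF nb]])
    have w1: "W ?b \<Phi> x \<le> exp ?b * W ?b \<Phi>' x" by (rule W_le[OF b0 nb])
    have zp: "Zn ?b n \<Phi> > 0" "Zn ?b n \<Phi>' > 0" using Zn_pos by auto
    have wp: "W ?b \<Phi>' x > 0" using W_pos by auto
    have "W ?b \<Phi> x * Zn ?b n \<Phi>' \<le> (exp ?b * W ?b \<Phi>' x) * (exp ?b * Zn ?b n \<Phi>)"
      using z1 w1 zp wp W_pos[of ?b \<Phi> x] by (intro mult_mono) auto
    then show ?thesis using zp unfolding e by (simp add: field_simps)
  qed
  show "measure_pmf.prob (gibbs ?b n \<Phi>) T \<le> exp \<epsilon> * measure_pmf.prob (gibbs ?b n \<Phi>') T + 0"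
    unfolding prob_gibbs sum_distrib_left add_0_right by (intro sum_mono) (rule pt)
qed


lemma gibbs_ineq:
  "ln (Zn b n \<Phi>) - real n * ln 2 \<le> b * (\<Sum>x\<in>assignments n. W b \<Phi> x / Zn b n \<Phi> * real (val \<Phi> x))"
proof -
  define A where "A = assignments n"
  define Z where "Z = Zn b n \<Phi>"
  define N :: real where "N = 2^n"
  define q where "q x = W b \<Phi> x / Z" for x
  define v where "v x = real (val \<Phi> x)" for x
  have Zp: "Z > 0" using Zn_pos Z_def by simp
  have Np: "N > 0" by (simp add: N_def)
  have qp: "q x > 0" for x using Zp W_pos by (simp add: q_def)
  have sq: "(\<Sum>x\<in>A. q x) = 1"
    using Zp by (simp add: q_def sum_divide_distrib[symmetric] Z_def Zn_def A_def)
  have lnN: "ln N = real n * ln 2" by (simp add: N_def ln_realpow)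
  have key: "q x * (ln Z - b * v x - real n * ln 2) \<le> 1/N - q x" for x
  proof -
    have eq: "1 / (q x * N) = Z / (W b \<Phi> x * N)" using Zp by (simp add: q_def)
    have "ln (1 / (q x * N)) = ln Z - (ln (W b \<Phi> x) + ln N)"
      unfolding eq using Zp Np W_pos[of b \<Phi> x] by (simp add: ln_div ln_mult)
    also have "ln (W b \<Phi> x) = b * v x" by (simp add: W_def v_def)
    finally have l: "ln (1 / (q x * N)) = ln Z - b * v x - real n * ln 2" using lnN by simp
    have "ln (1 / (q x * N)) \<le> 1 / (q x * N) - 1"
      using qp[of x] Np by (intro ln_le_minus_one) simp
    then have "q x * ln (1 / (q x * N)) \<le> q x * (1 / (q x * N) - 1)"
      using qp[of x] by (intro mult_left_mono) auto
    also have "\<dots> = 1/N - q x" using qp[of x] Np by (simp add: field_simps)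
    finally show ?thesis using l by simp
  qed
  have "(\<Sum>x\<in>A. q x * (ln Z - b * v x - real n * ln 2)) \<le> (\<Sum>x\<in>A. 1/N - q x)"
    by (rule sum_mono) (rule key)
  also have "\<dots> = real (card A) / N - 1" using sq by (simp add: sum_subtractf)
  also have "\<dots> = 0" using Np by (simp add: A_def cardA N_def)
  finally have "(\<Sum>x\<in>A. q x * (ln Z - real n * ln 2) - b * (q x * v x)) \<le> 0"
    by (simp add: algebra_simps)
  then have "(ln Z - real n * ln 2) * (\<Sum>x\<in>A. q x) - b * (\<Sum>x\<in>A. q x * v x) \<le> 0"
    by (simp add: sum_subtractf sum_distrib_left sum_distrib_right mult.commute)
  then show ?thesis using sq by (simp add: A_def Z_def q_def v_def)
qed

lemma gibbs_util:
  assumes b: "b > 0" and vi: "valid_instance k n \<Phi>"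
  shows "(\<Sum>x\<in>assignments n. W b \<Phi> x / Zn b n \<Phi> * real (val \<Phi> x))
           \<ge> real (OPT n \<Phi>) - real k * real (OPT n \<Phi>) * ln 2 / b"
proof -
  define A where "A = assignments n"
  define E where "E = (\<Sum>x\<in>assignments n. W b \<Phi> x / Zn b n \<Phi> * real (val \<Phi> x))"
  define Op where "Op = OPT n \<Phi>"
  have "Max (val \<Phi> ` A) \<in> val \<Phi> ` A" using fin ne A_def by (intro Max_in) auto
  then obtain xs where xs: "xs \<in> A" "val \<Phi> xs = Op" by (auto simp: Op_def OPT_def A_def)
  define S where "S = filter_mset (\<lambda>c. sat c xs) \<Phi>"
  have sizeS: "size S = Op" using xs by (simp add: S_def val_def)
  define V where "V = (\<Union>c\<in>set_mset S. set (snd c))"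
  have finV: "finite V" by (simp add: V_def)
  have Vn: "V \<subseteq> {..<n}" using vi by (auto simp: V_def S_def valid_instance_def)
  have cardV: "card V \<le> k * Op"
  proof -
    have "card V \<le> (\<Sum>c\<in>set_mset S. card (set (snd c)))" unfolding V_def by (rule card_UN_le) simp
    also have "\<dots> \<le> (\<Sum>c\<in>set_mset S. k)"
    proof (rule sum_mono)
      fix c assume "c \<in> set_mset S"
      then have "length (snd c) \<le> k" using vi by (auto simp: S_def valid_instance_def)
      then show "card (set (snd c)) \<le> k" using card_length le_trans by blast
    qed
    also have "\<dots> = k * card (set_mset S)" by simp
    also have "\<dots> \<le> k * Op" using card_set_mset_le[of S] sizeS by simp
    finally show ?thesis .
  qed
  define Ag where "Ag = {x\<in>A. \<forall>i\<in>V. x!i = xs!i}"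
  have cAg: "card Ag * 2^card V = 2^n" using count_agree[OF finV Vn, of xs] by (simp add: Ag_def A_def)
  have valAg: "real Op \<le> real (val \<Phi> x)" if x: "x \<in> Ag" for x
  proof -
    have "S \<subseteq># filter_mset (\<lambda>c. sat c x) \<Phi>"
      unfolding S_def
    proof (rule filter_mset_mono_strong[OF subset_mset.order_refl])
      fix c assume c: "c \<in># \<Phi>" "sat c xs"
      then have "c \<in># S" by (simp add: S_def)
      then have "set (snd c) \<subseteq> V" by (auto simp: V_def)
      then have "map (\<lambda>i. x ! i) (snd c) = map (\<lambda>i. xs ! i) (snd c)"
        using x by (auto simp: Ag_def)
      then show "sat c x" using c(2) unfolding sat_def by metis
    qed
    then have "size S \<le> val \<Phi> x" unfolding val_def by (rule size_mset_mono)
    then show ?thesis using sizeS by simp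
  qed
  have Zge: "real (card Ag) * exp (b * real Op) \<le> Zn b n \<Phi>"
  proof -
    have "real (card Ag) * exp (b * real Op) \<le> (\<Sum>x\<in>Ag. W b \<Phi> x)"
    proof (rule sum_bounded_below)
      fix x assume "x \<in> Ag"
      then show "exp (b * real Op) \<le> W b \<Phi> x" using valAg b by (simp add: W_def)
    qed
    also have "\<dots> \<le> Zn b n \<Phi>" unfolding Zn_def
      using fin W_pos by (intro sum_mono2) (auto simp: Ag_def A_def less_imp_le)
    finally show ?thesis .
  qed
  have cAgr: "real (card Ag) = 2^n / 2^card V" using cAg
    by (metis (mono_tags, lifting) nonzero_mult_div_cancel_right of_nat_mult of_nat_numeral of_nat_power power_not_zero zero_neq_numeral)
  have Agp: "real (card Ag) > 0" using cAgr by simp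
  have "ln (real (card Ag) * exp (b * real Op)) \<le> ln (Zn b n \<Phi>)"
    using Zge Agp Zn_pos[of b n \<Phi>] by (subst ln_le_cancel_iff) auto
  then have "ln (real (card Ag)) + b * real Op \<le> ln (Zn b n \<Phi>)"
    using Agp by (simp add: ln_mult)
  moreover have "ln (real (card Ag)) = real n * ln 2 - real (card V) * ln 2"
    unfolding cAgr by (simp add: ln_div ln_realpow)
  moreover have "real (card V) * ln 2 \<le> real k * real Op * ln 2"
    using cardV by (intro mult_right_mono) (auto simp flip: of_nat_mult)
  moreover have "ln (Zn b n \<Phi>) - real n * ln 2 \<le> b * E" using gibbs_ineq E_def by simp
  ultimately have "b * real Op - real k * real Op * ln 2 \<le> b * E" by linarith
  then have "real Op - real k * real Op * ln 2 / b \<le> E" using b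
    by (simp add: field_simps)
  then show ?thesis by (simp add: E_def Op_def)
qed

theorem corollary1p1:
  fixes k :: nat
  assumes "k \<ge> 1"
  shows "\<exists>C>0. \<forall>\<epsilon>>0. \<exists>M :: nat \<Rightarrow> csp_inst \<Rightarrow> bool list pmf.
           diff_private k \<epsilon> 0 M \<and>
           (\<forall>n \<Phi>. valid_instance k n \<Phi> \<longrightarrow>
              set_pmf (M n \<Phi>) \<subseteq> assignments n \<and>
              measure_pmf.expectation (M n \<Phi>) (\<lambda>x. real (val \<Phi> x))
                \<ge> (1 - C / \<epsilon>) * real (OPT n \<Phi>))"
proof (intro exI[of _ "2 * real k * ln 2"] conjI allI impI)
  show "2 * real k * ln 2 > 0" using assms by simp
  fix \<epsilon> :: real assume e: "\<epsilon> > 0"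
  show "\<exists>M :: nat \<Rightarrow> csp_inst \<Rightarrow> bool list pmf.
           diff_private k \<epsilon> 0 M \<and>
           (\<forall>n \<Phi>. valid_instance k n \<Phi> \<longrightarrow>
              set_pmf (M n \<Phi>) \<subseteq> assignments n \<and>
              measure_pmf.expectation (M n \<Phi>) (\<lambda>x. real (val \<Phi> x))
                \<ge> (1 - 2 * real k * ln 2 / \<epsilon>) * real (OPT n \<Phi>))"
  proof (intro exI[of _ "gibbs (\<epsilon>/2)"] conjI allI impI)
    show "diff_private k \<epsilon> 0 (gibbs (\<epsilon> / 2))" by (rule gibbs_dp[OF e])
    fix n \<Phi> assume vi: "valid_instance k n \<Phi>"
    show "set_pmf (gibbs (\<epsilon> / 2) n \<Phi>) \<subseteq> assignments n" by (rule set_gibbs)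
    have "(1 - 2 * real k * ln 2 / \<epsilon>) * real (OPT n \<Phi>)
          = real (OPT n \<Phi>) - real k * real (OPT n \<Phi>) * ln 2 / (\<epsilon>/2)"
      using e by (simp add: field_simps)
    also have "\<dots> \<le> measure_pmf.expectation (gibbs (\<epsilon> / 2) n \<Phi>) (\<lambda>x. real (val \<Phi> x))"
      unfolding expect_gibbs using gibbs_util[of "\<epsilon>/2" k n \<Phi>] e vi by simp
    finally show "(1 - 2 * real k * ln 2 / \<epsilon>) * real (OPT n \<Phi>)
      \<le> measure_pmf.expectation (gibbs (\<epsilon> / 2) n \<Phi>) (\<lambda>x. real (val \<Phi> x))" .
  qed
qed

end
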